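(* Let $m\ge 2$ be an integer, let $a\in\mathbb{R}$, and let $X$ be a real random variable on $\mathcal{B}_{m-1}$, regarded as a random variable on $\mathcal{B}_m$ via $T\mapsto X(T^{(m-1)})$. Then \[ \mathbb{E}_m\!\left[X\,a^{U_m}\right]=\frac{a}{m}\,\mathbb{E}_{m-1}\!\left[X\,(a+1)^{U_{m-1}}\right]. \]
   Context: A Ferrers diagram is a left-justified array of cells whose row lengths weakly decrease from top to bottom (rows of length $0$ are allowed). Its half-perimeter is the number of rows plus the number of columns. Its southeast boundary, traversed from the northeast corner to the southwest corner, consists of $n$ unit steps (where $n$ is the half-perimeter), each south or west; south steps correspond to rows and west steps to columns. We write $S_k$ (resp. $W_k$) for the event that the $k$-th step is south (resp. west). If the diagram has $c$ columns, the shifted Ferrers diagram is obtained by inserting $c$ new left-justified rows above it, of lengths $c,c-1,\dots,1$ from top to bottom; the rightmost cell of each inserted row is a diagonal cell (each column contains exactly one diagonal cell). A type-B permutation tableau of size $n$ is a filling of the cells of a shifted Ferrers diagram of half-perimeter $n$ with $0$'s and $1$'s such that: (1) every column contains at least one $1$; (2) no $0$ has both a $1$ above it in its column and a $1$ to its left in its row; (3) if a diagonal cell contains $0$ then every cell of its row contains $0$. Let $\mathcal{B}_n$ be the set of such tableaux ($|\mathcal{B}_n|=2^n n!$), $\mathbb{P}_n$ the uniform probability measure on $\mathcal{B}_n$, and $\mathbb{E}_n$ the corresponding expectation. For $T\in\mathcal{B}_n$ and $1\le k\le n$, let $T^{(k)}\in\mathcal{B}_k$ be the tableau determined by the first $k$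 boundary steps of $T$: delete the rows corresponding to south steps $k+1,\dots,n$ and the columns corresponding to west steps $k+1,\dots,n$ together with their inserted diagonal rows. A restricted $0$ is a cell containing $0$ that either has a $1$ above it in its column or is a diagonal cell. A row (of the shifted diagram, possibly of length $0$) is unrestricted if it contains no restricted $0$. For $T\in\mathcal{B}_n$, $U_k=U_k(T)$ denotes the number of unrestricted rows of $T^{(k)}$; in particular $U_n(T)$ is the number of unrestricted rows of $T$. *)

theory Defs
  imports "HOL-Probability.Probability"
begin

text \<open>
  A type-B permutation tableau is encoded as a pair (w, f):
  w is the boundary word (w ! k = True iff the (k+1)-th step is South), steps indexed 0..n-1;
  rows of the shifted diagram are indexed by steps k (a South step k gives an original row,
  a West step k gives the inserted diagonal row of column k); columns are indexed by West steps j;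
  a larger column index means further to the left.  f k j = True means cell (k,j) contains 1;
  f is required to be False outside the diagram.
\<close>

type_synonym tableau = "bool list \<times> (nat \<Rightarrow> nat \<Rightarrow> bool)"

definition cell :: "bool list \<Rightarrow> nat \<Rightarrow> nat \<Rightarrow> bool" where
  "cell w k j \<longleftrightarrow> k < length w \<and> j < length w \<and> \<not> w ! j \<and>
     (if w ! k then k < j else k \<le> j)"

definition above :: "bool list \<Rightarrow> nat \<Rightarrow> nat \<Rightarrow> nat \<Rightarrow> bool" where
  "above w k' k j \<longleftrightarrow> cell w k' j \<and> cell w k j \<and>
     ((\<not> w ! k' \<and> w ! k) \<or> (\<not> w ! k' \<and> \<not> w ! k \<and> k < k') \<or> (w ! k' \<and> w ! k \<and> k' < k))"

definition diag_cell :: "bool list \<Rightarrow> nat \<Rightarrow> nat \<Rightarrow> bool" where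
  "diag_cell w k j \<longleftrightarrow> cell w k j \<and> k = j"

definition is_tableau :: "nat \<Rightarrow> tableau \<Rightarrow> bool" where
  "is_tableau n T \<longleftrightarrow> (case T of (w, f) \<Rightarrow>
     length w = n \<and>
     (\<forall>k j. f k j \<longrightarrow> cell w k j) \<and>
     (\<forall>j<n. \<not> w ! j \<longrightarrow> (\<exists>k. cell w k j \<and> f k j)) \<and>
     (\<forall>k j. cell w k j \<and> \<not> f k j \<and> (\<exists>k'. above w k' k j \<and> f k' j)
              \<longrightarrow> \<not> (\<exists>j'. j < j' \<and> cell w k j' \<and> f k j')) \<and>
     (\<forall>j. diag_cell w j j \<and> \<not> f j j \<longrightarrow> (\<forall>j'. cell w j j' \<longrightarrow> \<not> f j j')))"

definition tableaux :: "nat \<Rightarrow> tableau set" where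
  "tableaux n = {T. is_tableau n T}"

definition restricted_zero :: "tableau \<Rightarrow> nat \<Rightarrow> nat \<Rightarrow> bool" where
  "restricted_zero T k j \<longleftrightarrow> (case T of (w, f) \<Rightarrow>
     cell w k j \<and> \<not> f k j \<and> ((\<exists>k'. above w k' k j \<and> f k' j) \<or> diag_cell w k j))"

definition unrestricted_row :: "tableau \<Rightarrow> nat \<Rightarrow> bool" where
  "unrestricted_row T k \<longleftrightarrow> k < length (fst T) \<and> \<not> (\<exists>j. restricted_zero T k j)"

definition U :: "tableau \<Rightarrow> nat" where
  "U T = card {k. unrestricted_row T k}"

definition trunc :: "nat \<Rightarrow> tableau \<Rightarrow> tableau" where
  "trunc k T = (case T of (w, f) \<Rightarrow> (take k w, \<lambda>a b. a < k \<and> b < k \<and> f a b))"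

definition E :: "nat \<Rightarrow> (tableau \<Rightarrow> real) \<Rightarrow> real" where
  "E n Y = measure_pmf.expectation (pmf_of_set (tableaux n)) Y"

end

theory Submission
  imports Defs
begin


lemma cell_app: "cell (w@[s]) k j \<longleftrightarrow> (k < length w \<and> j < length w \<and> cell w k j) \<or> (j = length w \<and> \<not> s \<and> k \<le> length w)"
  unfolding cell_def by (auto simp: nth_append split: if_splits)

lemma cell_lt: "cell w k j \<Longrightarrow> k < length w \<and> j < length w"
  unfolding cell_def by auto

lemma above_old: "j < length w \<Longrightarrow> above (w@[s]) k' k j \<longleftrightarrow> above w k' k j"
  unfolding above_def using cell_app[of w s] cell_lt[of w]
  by (auto simp: nth_append)

definition key :: "bool list \<Rightarrow> nat \<Rightarrow> nat" where
  "key w k = (if k < length w \<and> w!k then length w + 1 + k else length w - k)"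

lemma above_new: "above (w@[False]) k' k (length w) \<longleftrightarrow> k' \<le> length w \<and> k \<le> length w \<and> key w k' < key w k"
  unfolding above_def key_def cell_app by (auto simp: nth_append)

lemma diag_old: "j < length w \<Longrightarrow> diag_cell (w@[s]) k j \<longleftrightarrow> diag_cell w k j"
  unfolding diag_cell_def using cell_app[of w s] cell_lt[of w] by auto

lemma inj_key: "inj_on (key w) {..length w}"
  unfolding key_def inj_on_def by (auto split: if_splits)



lemma sum_pow_card: "finite A \<Longrightarrow> (\<Sum>S\<in>Pow A. (a::real) ^ card S) = (1+a)^card A"
proof (induction A rule: finite_induct)
  case empty then show ?case by simp
next
  case (insert x A)
  have d: "Pow A \<inter> insert x ` Pow A = {}" using insert by auto
  have i: "inj_on (insert x) (Pow A)" using insert unfolding inj_on_def by (metis PowD insert_ident subsetD)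
  have fin: "finite (Pow A)" using insert by simp
  have "(\<Sum>S\<in>Pow (insert x A). a ^ card S) = (\<Sum>S\<in>Pow A. a ^ card S) + (\<Sum>S\<in>insert x ` Pow A. a ^ card S)"
    unfolding Pow_insert by (rule sum.union_disjoint) (use fin d in auto)
  also have "(\<Sum>S\<in>insert x ` Pow A. a ^ card S) = (\<Sum>S\<in>Pow A. a ^ card (insert x S))"
    by (rule sum.reindex[OF i, unfolded comp_def])
  also have "\<dots> = (\<Sum>S\<in>Pow A. a * a ^ card S)"
  proof (rule sum.cong)
    fix S assume "S \<in> Pow A"
    then have "card (insert x S) = Suc (card S)" using insert finite_subset by (auto intro!: card_insert_disjoint)
    then show "a ^ card (insert x S) = a * a ^ card S" by simp
  qed simp
  finally show ?case using insert by (simp add: sum_distrib_left[symmetric] algebra_simps)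
qed

lemma gen_sum:
  fixes a :: real and key :: "nat \<Rightarrow> nat"
  assumes "finite R" "inj_on key R"
  shows "(\<Sum>S\<in>{S. S \<subseteq> R \<and> S \<noteq> {}}. a ^ card {k\<in>R. k\<in>S \<or> \<not>(\<exists>k'\<in>S. key k' < key k)})
         = a*(1+a)^card R - a^Suc(card R)"
  using assms
proof (induction "card R" arbitrary: R)
  case 0
  then have "R = {}" by simp
  then show ?case by simp
next
  case (Suc r)
  then have ne: "R \<noteq> {}" by auto
  have "Min (key ` R) \<in> key ` R" using Min_in[of "key ` R"] Suc.prems ne by auto
  then obtain t where t: "t \<in> R" "key t = Min (key ` R)" by (metis imageE)
  have tmin: "\<And>k. k \<in> R \<Longrightarrow> key t \<le> key k" using t Suc.prems by simp
  have tlt: "\<And>k. k \<in> R \<Longrightarrow> k \<noteq> t \<Longrightarrow> key t < key k"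
    using tmin t(1) Suc.prems(2) unfolding inj_on_def by (metis le_neq_implies_less)
  define R' where "R' = R - {t}"
  have finR': "finite R'" using Suc.prems R'_def by simp
  have cR': "card R' = r" using Suc.hyps(2) t(1) Suc.prems R'_def by simp
  have tR': "t \<notin> R'" using R'_def by simp
  have R: "R = insert t R'" using R'_def t by auto
  have IH: "(\<Sum>S\<in>{S. S \<subseteq> R' \<and> S \<noteq> {}}. a ^ card {k\<in>R'. k\<in>S \<or> \<not>(\<exists>k'\<in>S. key k' < key k)})
         = a*(1+a)^r - a^Suc r"
    using Suc.hyps(1)[of R'] cR' finR' Suc.prems(2) R'_def by (simp add: inj_on_diff)
  define g where "g S = a ^ card {k\<in>R. k\<in>S \<or> \<not>(\<exists>k'\<in>S. key k' < key k)}" for S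
  have split: "{S. S \<subseteq> R \<and> S \<noteq> {}} = insert t ` Pow R' \<union> {S. S \<subseteq> R' \<and> S \<noteq> {}}"
  proof (rule set_eqI)
    fix S show "S \<in> {S. S \<subseteq> R \<and> S \<noteq> {}} \<longleftrightarrow> S \<in> insert t ` Pow R' \<union> {S. S \<subseteq> R' \<and> S \<noteq> {}}"
    proof
      assume h: "S \<in> {S. S \<subseteq> R \<and> S \<noteq> {}}"
      show "S \<in> insert t ` Pow R' \<union> {S. S \<subseteq> R' \<and> S \<noteq> {}}"
      proof (cases "t \<in> S")
        case True
        then have "S = insert t (S - {t})" by auto
        moreover have "S - {t} \<in> Pow R'" using h R'_def by auto
        ultimately show ?thesis by blast
      next
        case False then show ?thesis using h R'_def by auto
      qed
    next
      assume "S \<in> insert t ` Pow R' \<union> {S. S \<subseteq> R' \<and> S \<noteq> {}}"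
      then show "S \<in> {S. S \<subseteq> R \<and> S \<noteq> {}}" using R by auto
    qed
  qed
  have disj: "insert t ` Pow R' \<inter> {S. S \<subseteq> R' \<and> S \<noteq> {}} = {}" using tR' by auto
  have inj: "inj_on (insert t) (Pow R')" using tR' unfolding inj_on_def by (metis PowD insert_ident subsetD)
  have fins: "finite (insert t ` Pow R')" "finite {S. S \<subseteq> R' \<and> S \<noteq> {}}" using finR' by auto
  have "(\<Sum>S\<in>{S. S \<subseteq> R \<and> S \<noteq> {}}. g S) = (\<Sum>S\<in>insert t ` Pow R'. g S) + (\<Sum>S\<in>{S. S \<subseteq> R' \<and> S \<noteq> {}}. g S)"
    unfolding split by (rule sum.union_disjoint[OF fins disj])
  also have "(\<Sum>S\<in>insert t ` Pow R'. g S) = (\<Sum>S\<in>Pow R'. g (insert t S))"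
    by (rule sum.reindex[OF inj, unfolded comp_def])
  also have "\<dots> = (\<Sum>S\<in>Pow R'. a * a ^ card S)"
  proof (rule sum.cong)
    fix S assume S: "S \<in> Pow R'"
    have "{k\<in>R. k\<in>insert t S \<or> \<not>(\<exists>k'\<in>insert t S. key k' < key k)} = insert t S"
      using S tlt R by auto
    moreover have "card (insert t S) = Suc (card S)" using S tR' finR' finite_subset by (auto intro!: card_insert_disjoint)
    ultimately show "g (insert t S) = a * a ^ card S" unfolding g_def by simp
  qed simp
  also have "\<dots> = a * (1+a)^r" using sum_pow_card[OF finR', of a] cR' by (simp add: sum_distrib_left[symmetric])
  also have "(\<Sum>S\<in>{S. S \<subseteq> R' \<and> S \<noteq> {}}. g S) = (\<Sum>S\<in>{S. S \<subseteq> R' \<and> S \<noteq> {}}. a * a ^ card {k\<in>R'. k\<in>S \<or> \<not>(\<exists>k'\<in>S. key k' < key k)})"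
  proof (rule sum.cong)
    fix S assume S: "S \<in> {S. S \<subseteq> R' \<and> S \<noteq> {}}"
    have "{k\<in>R. k\<in>S \<or> \<not>(\<exists>k'\<in>S. key k' < key k)} = insert t {k\<in>R'. k\<in>S \<or> \<not>(\<exists>k'\<in>S. key k' < key k)}"
      using S tmin R by (auto simp: not_less)
    moreover have "card (insert t {k\<in>R'. k\<in>S \<or> \<not>(\<exists>k'\<in>S. key k' < key k)}) = Suc (card {k\<in>R'. k\<in>S \<or> \<not>(\<exists>k'\<in>S. key k' < key k)})"
      using tR' finR' by (auto intro!: card_insert_disjoint)
    ultimately show "g S = a * a ^ card {k\<in>R'. k\<in>S \<or> \<not>(\<exists>k'\<in>S. key k' < key k)}" unfolding g_def by simp
  qed simp
  also have "\<dots> = a * (a*(1+a)^r - a^Suc r)" using IH by (simp add: sum_distrib_left[symmetric])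
  finally have "(\<Sum>S\<in>{S. S \<subseteq> R \<and> S \<noteq> {}}. g S) = a * (1+a)^r + a * (a*(1+a)^r - a^Suc r)" .
  then show ?case unfolding g_def Suc.hyps(2)[symmetric] by (simp add: algebra_simps)
qed



definition extS :: "tableau \<Rightarrow> tableau" where "extS T = (fst T @ [True], snd T)"
definition extW :: "tableau \<Rightarrow> nat set \<Rightarrow> tableau" where
  "extW T S = (fst T @ [False], \<lambda>k j. snd T k j \<or> (j = length (fst T) \<and> k \<in> S))"
definition Rset :: "tableau \<Rightarrow> nat set" where "Rset T = {k. unrestricted_row T k}"

lemma is_tab_unf: "is_tableau n (w,f) \<longleftrightarrow>
     length w = n \<and>
     (\<forall>k j. f k j \<longrightarrow> cell w k j) \<and>
     (\<forall>j<n. \<not> w ! j \<longrightarrow> (\<exists>k. cell w k j \<and> f k j)) \<and>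
     (\<forall>k j. cell w k j \<and> \<not> f k j \<and> (\<exists>k'. above w k' k j \<and> f k' j)
              \<longrightarrow> \<not> (\<exists>j'. j < j' \<and> cell w k j' \<and> f k j')) \<and>
     (\<forall>j. diag_cell w j j \<and> \<not> f j j \<longrightarrow> (\<forall>j'. cell w j j' \<longrightarrow> \<not> f j j'))"
  unfolding is_tableau_def by simp

lemma is_tab_D1: "is_tableau n (w,f) \<Longrightarrow> length w = n"
  unfolding is_tab_unf by (elim conjE)

lemma is_tab_D2: "is_tableau n (w,f) \<Longrightarrow> \<forall>k j. f k j \<longrightarrow> cell w k j"
  unfolding is_tab_unf by (elim conjE)

lemma is_tab_D3: "is_tableau n (w,f) \<Longrightarrow> \<forall>j<n. \<not> w ! j \<longrightarrow> (\<exists>k. cell w k j \<and> f k j)"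
  unfolding is_tab_unf by (elim conjE)

lemma is_tab_D4: "is_tableau n (w,f) \<Longrightarrow> \<forall>k j. cell w k j \<and> \<not> f k j \<and> (\<exists>k'. above w k' k j \<and> f k' j)
              \<longrightarrow> \<not> (\<exists>j'. j < j' \<and> cell w k j' \<and> f k j')"
  unfolding is_tab_unf by (elim conjE)

lemma is_tab_D5: "is_tableau n (w,f) \<Longrightarrow> \<forall>j. diag_cell w j j \<and> \<not> f j j \<longrightarrow> (\<forall>j'. cell w j j' \<longrightarrow> \<not> f j j')"
  unfolding is_tab_unf by (elim conjE)

lemma rz_unf: "restricted_zero (w,f) k j \<longleftrightarrow> cell w k j \<and> \<not> f k j \<and> ((\<exists>k'. above w k' k j \<and> f k' j) \<or> diag_cell w k j)"
  unfolding restricted_zero_def by simp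

lemma above_cell: "above w k' k j \<Longrightarrow> cell w k' j \<and> cell w k j" unfolding above_def by simp
lemma diag_cell_cell: "diag_cell w k j \<Longrightarrow> cell w k j \<and> k = j" unfolding diag_cell_def by auto

lemma cellT: "cell (w@[True]) k j \<longleftrightarrow> cell w k j"
  unfolding cell_def by (auto simp: nth_append split: if_splits)

lemma aboveT: "above (w@[True]) k' k j \<longleftrightarrow> above w k' k j"
  unfolding above_def cellT using cell_lt[of w k' j] cell_lt[of w k j] by (auto simp: nth_append)

lemma diagT: "diag_cell (w@[True]) k j \<longleftrightarrow> diag_cell w k j"
  unfolding diag_cell_def cellT ..

lemma rz_extS: "restricted_zero (extS (w,f)) k j \<longleftrightarrow> restricted_zero (w,f) k j"
  unfolding extS_def by (simp only: rz_unf cellT aboveT diagT fst_conv snd_conv)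

lemma tab_extS: "is_tableau n (w,f) \<Longrightarrow> is_tableau (Suc n) (extS (w,f))"
proof -
  assume h: "is_tableau n (w,f)"
  note l = is_tab_D1[OF h] and H2 = is_tab_D2[OF h] and H3 = is_tab_D3[OF h]
    and H4 = is_tab_D4[OF h] and H5 = is_tab_D5[OF h]
  have c3: "\<forall>j<Suc n. \<not> (w@[True]) ! j \<longrightarrow> (\<exists>k. cell w k j \<and> f k j)"
  proof (intro allI impI)
    fix j assume j: "j < Suc n" "\<not> (w@[True]) ! j"
    have jn: "j < n"
    proof (rule ccontr)
      assume "\<not> j < n" then have "j = n" using j(1) by simp
      then have "(w@[True]) ! j" by (simp add: l[symmetric])
      then show False using j(2) by simp
    qed
    then have "\<not> w ! j" using j l by (simp add: nth_append)
    then show "\<exists>k. cell w k j \<and> f k j" using jn H3 by blast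
  qed
  show ?thesis unfolding extS_def fst_conv snd_conv is_tab_unf cellT aboveT diagT
    apply (intro conjI)
    apply (simp add: l)
    apply (rule H2)
    apply (rule c3)
    apply (rule H4)
    apply (rule H5)
    done
qed

lemma finite_ur: "finite {k. unrestricted_row T k}"
  by (rule finite_subset[of _ "{..<length (fst T)}"]) (auto simp: unrestricted_row_def)

lemma rz_lt: "restricted_zero (w,f) k j \<Longrightarrow> k < length w \<and> j < length w"
  unfolding rz_unf using cell_lt by blast

lemma ur_unf: "unrestricted_row (w,f) k \<longleftrightarrow> k < length w \<and> \<not>(\<exists>j. restricted_zero (w,f) k j)"
  unfolding unrestricted_row_def by simp

lemma U_extS: assumes "is_tableau n (w,f)" shows "U (extS (w,f)) = Suc (U (w,f))"
proof -
  have l: "length w = n" using is_tab_D1[OF assms] .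
  have "{k. unrestricted_row (extS (w,f)) k} = insert n {k. unrestricted_row (w,f) k}"
  proof (rule set_eqI)
    fix k
    have e: "unrestricted_row (extS (w,f)) k \<longleftrightarrow> k < Suc n \<and> \<not>(\<exists>j. restricted_zero (w,f) k j)"
      unfolding unrestricted_row_def rz_extS[symmetric] by (simp add: extS_def l)
    show "k \<in> {k. unrestricted_row (extS (w,f)) k} \<longleftrightarrow> k \<in> insert n {k. unrestricted_row (w,f) k}"
      unfolding mem_Collect_eq insert_iff e ur_unf l using rz_lt[of w f k] l by auto
  qed
  moreover have "n \<notin> {k. unrestricted_row (w,f) k}" using l by (simp add: ur_unf)
  ultimately show ?thesis unfolding U_def using finite_ur by simp
qed

lemma cellF: "cell (w@[False]) k j \<longleftrightarrow> cell w k j \<or> (j = length w \<and> k \<le> length w)"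
  using cell_app[of w False] cell_lt[of w] by auto

lemma extW_eq: "extW (w,f) S = (w@[False], \<lambda>k j. f k j \<or> (j = length w \<and> k \<in> S))"
  unfolding extW_def by simp

lemma rz_extW_old: "j < length w \<Longrightarrow> restricted_zero (extW (w,f) S) k j \<longleftrightarrow> restricted_zero (w,f) k j"
  unfolding extW_eq rz_unf using above_old[of j w False] diag_old[of j w False] cell_app[of w False k j] cell_lt[of w k j]
  by auto

lemma rz_extW_new: assumes "\<forall>k. \<not> f k (length w)"
  shows "restricted_zero (extW (w,f) S) k (length w) \<longleftrightarrow>
     k \<le> length w \<and> k \<notin> S \<and> ((\<exists>k'. k' \<le> length w \<and> key w k' < key w k \<and> k' \<in> S) \<or> k = length w)"
  unfolding extW_eq rz_unf above_new diag_cell_def cellF using assms cell_lt[of w k "length w"] by auto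

lemma rz_extW_big: "length w < j \<Longrightarrow> \<not> restricted_zero (extW (w,f) S) k j"
  unfolding extW_eq rz_unf cellF using cell_lt[of w k j] by auto

lemma Rset_lt: "k \<in> Rset (w,f) \<Longrightarrow> k < length w"
  unfolding Rset_def by (simp add: ur_unf)

lemma rz_notR: "restricted_zero (w,f) k j \<Longrightarrow> k \<notin> Rset (w,f)"
  unfolding Rset_def by (auto simp: ur_unf)

lemma tab_extW:
  assumes h: "is_tableau n (w,f)" and S: "S \<subseteq> insert n (Rset (w,f))" and ne: "S \<noteq> {}"
  shows "is_tableau (Suc n) (extW (w,f) S)"
proof -
  note l = is_tab_D1[OF h] and H2 = is_tab_D2[OF h] and H3 = is_tab_D3[OF h]
    and H4 = is_tab_D4[OF h] and H5 = is_tab_D5[OF h]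
  define F where "F k j = (f k j \<or> (j = n \<and> k \<in> S))" for k j
  have E: "extW (w,f) S = (w@[False], F)" unfolding extW_eq F_def l ..
  have Sle: "\<And>k. k \<in> S \<Longrightarrow> k \<le> n" using S Rset_lt[of _ w f] l by fastforce
  have fn: "\<And>k. \<not> f k n" using H2 cell_lt[of w] l by blast
  have cF: "\<And>k j. cell (w@[False]) k j \<longleftrightarrow> cell w k j \<or> (j = n \<and> k \<le> n)" using cellF l by simp
  have c2: "\<forall>k j. F k j \<longrightarrow> cell (w@[False]) k j"
    unfolding F_def cF using H2 Sle by blast
  have c3: "\<forall>j<Suc n. \<not> (w@[False]) ! j \<longrightarrow> (\<exists>k. cell (w@[False]) k j \<and> F k j)"
  proof (intro allI impI)
    fix j assume j: "j < Suc n" "\<not> (w@[False]) ! j"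
    show "\<exists>k. cell (w@[False]) k j \<and> F k j"
    proof (cases "j = n")
      case True
      obtain k where "k \<in> S" using ne by blast
      then show ?thesis using True Sle unfolding cF F_def by blast
    next
      case False
      then have jn: "j < n" using j by simp
      then have "\<not> w ! j" using j l by (simp add: nth_append)
      then obtain k where "cell w k j" "f k j" using jn H3 by blast
      then show ?thesis unfolding cF F_def by blast
    qed
  qed
  have c4: "\<forall>k j. cell (w@[False]) k j \<and> \<not> F k j \<and> (\<exists>k'. above (w@[False]) k' k j \<and> F k' j)
              \<longrightarrow> \<not> (\<exists>j'. j < j' \<and> cell (w@[False]) k j' \<and> F k j')"
  proof (intro allI impI)
    fix k j assume a: "cell (w@[False]) k j \<and> \<not> F k j \<and> (\<exists>k'. above (w@[False]) k' k j \<and> F k' j)"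
    show "\<not> (\<exists>j'. j < j' \<and> cell (w@[False]) k j' \<and> F k j')"
    proof (cases "j = n")
      case True
      then show ?thesis unfolding cF using cell_lt[of w k] l by fastforce
    next
      case False
      then have cw: "cell w k j" using a cF by blast
      then have jn: "j < n" and kn: "k < n" using cell_lt l by auto
      have nf: "\<not> f k j" using a F_def by blast
      obtain k' where k': "above (w@[False]) k' k j" "F k' j" using a by blast
      have ab: "above w k' k j" using k'(1) above_old[of j w False] jn l by simp
      have fk': "f k' j" using k'(2) False F_def by blast
      have "restricted_zero (w,f) k j" unfolding rz_unf using cw nf ab fk' by blast
      then have kS: "k \<notin> S" using rz_notR S kn by blast
      have no: "\<not> (\<exists>j'. j < j' \<and> cell w k j' \<and> f k j')" using H4 cw nf ab fk' by blast
      show ?thesis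
      proof
        assume "\<exists>j'. j < j' \<and> cell (w@[False]) k j' \<and> F k j'"
        then obtain j' where j': "j < j'" "cell (w@[False]) k j'" "F k j'" by blast
        show False
        proof (cases "j' = n")
          case True then show False using j'(3) kS fn F_def by blast
        next
          case False
          then have "cell w k j'" "f k j'" using j' cF F_def by blast+
          then show False using no j'(1) by blast
        qed
      qed
    qed
  qed
  have c5: "\<forall>j. diag_cell (w@[False]) j j \<and> \<not> F j j \<longrightarrow> (\<forall>j'. cell (w@[False]) j j' \<longrightarrow> \<not> F j j')"
  proof (intro allI impI)
    fix j j' assume a: "diag_cell (w@[False]) j j \<and> \<not> F j j" and c: "cell (w@[False]) j j'"
    show "\<not> F j j'"
    proof (cases "j = n")
      case True
      then have "j' = n" using c cF cell_lt[of w j j'] l by auto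
      then show ?thesis using a True by simp
    next
      case False
      then have cw: "cell w j j" using a cF unfolding diag_cell_def by blast
      then have jn: "j < n" using cell_lt l by auto
      have nf: "\<not> f j j" using a F_def by blast
      have "restricted_zero (w,f) j j" unfolding rz_unf diag_cell_def using cw nf by blast
      then have jS: "j \<notin> S" using rz_notR S jn by blast
      show ?thesis
      proof (cases "j' = n")
        case True then show ?thesis using jS fn F_def by blast
      next
        case False
        then have "cell w j j'" using c cF by blast
        then have "\<not> f j j'" using H5 cw nf unfolding diag_cell_def by blast
        then show ?thesis using False F_def by blast
      qed
    qed
  qed
  show ?thesis unfolding E is_tab_unf
    apply (intro conjI)
    apply (simp add: l)
    apply (rule c2)
    apply (rule c3)
    apply (rule c4)
    apply (rule c5)
    done
qed

lemma UR_extW: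
  assumes h: "is_tableau n (w,f)" and S: "S \<subseteq> insert n (Rset (w,f))"
  shows "{k. unrestricted_row (extW (w,f) S) k} =
    {k. (k = n \<or> k \<in> Rset (w,f)) \<and> \<not>(k \<notin> S \<and> ((\<exists>k'\<in>S. key w k' < key w k) \<or> k = n))}"
proof (rule set_eqI)
  fix k
  note l = is_tab_D1[OF h] and H2 = is_tab_D2[OF h]
  have fn: "\<forall>k. \<not> f k (length w)" using H2 cell_lt[of w] by blast
  have Sle: "\<And>k. k \<in> S \<Longrightarrow> k \<le> n" using S Rset_lt[of _ w f] l by fastforce
  have A: "(\<exists>j. restricted_zero (extW (w,f) S) k j) \<longleftrightarrow> (\<exists>j. restricted_zero (w,f) k j) \<or>
       (k \<le> n \<and> k \<notin> S \<and> ((\<exists>k'\<in>S. key w k' < key w k) \<or> k = n))"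
  proof
    assume "\<exists>j. restricted_zero (extW (w,f) S) k j"
    then obtain j where j: "restricted_zero (extW (w,f) S) k j" by blast
    consider "j < n" | "j = n" | "n < j" by linarith
    then show "(\<exists>j. restricted_zero (w,f) k j) \<or> (k \<le> n \<and> k \<notin> S \<and> ((\<exists>k'\<in>S. key w k' < key w k) \<or> k = n))"
    proof cases
      case 1 then show ?thesis using j rz_extW_old[of j w f S k] l by auto
    next
      case 2 then show ?thesis using j rz_extW_new[of f w S k, OF fn] l by auto
    next
      case 3 then show ?thesis using j rz_extW_big[of w j f S k] l by auto
    qed
  next
    assume "(\<exists>j. restricted_zero (w,f) k j) \<or> (k \<le> n \<and> k \<notin> S \<and> ((\<exists>k'\<in>S. key w k' < key w k) \<or> k = n))"
    then show "\<exists>j. restricted_zero (extW (w,f) S) k j"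
    proof
      assume "\<exists>j. restricted_zero (w,f) k j"
      then obtain j where j: "restricted_zero (w,f) k j" by blast
      then show ?thesis using rz_extW_old[of j w f S k] rz_lt[OF j] by blast
    next
      assume a: "k \<le> n \<and> k \<notin> S \<and> ((\<exists>k'\<in>S. key w k' < key w k) \<or> k = n)"
      have "restricted_zero (extW (w,f) S) k (length w)"
        unfolding rz_extW_new[of f w S k, OF fn] using a Sle l by blast
      then show ?thesis by blast
    qed
  qed
  have B: "k < Suc n \<Longrightarrow> \<not>(\<exists>j. restricted_zero (w,f) k j) \<longleftrightarrow> k = n \<or> k \<in> Rset (w,f)"
    unfolding Rset_def mem_Collect_eq ur_unf using rz_lt[of w f k] l by auto
  have len: "length (fst (extW (w,f) S)) = Suc n" unfolding extW_eq using l by simp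
  show "k \<in> {k. unrestricted_row (extW (w,f) S) k} \<longleftrightarrow>
    k \<in> {k. (k = n \<or> k \<in> Rset (w,f)) \<and> \<not>(k \<notin> S \<and> ((\<exists>k'\<in>S. key w k' < key w k) \<or> k = n))}"
    unfolding mem_Collect_eq unrestricted_row_def len A using B Rset_lt[of k w f] l by auto
qed

lemma key_n: "key w (length w) = 0" unfolding key_def by simp
lemma key_pos: "k < length w \<Longrightarrow> 0 < key w k" unfolding key_def by simp

lemma U_extW_in:
  assumes h: "is_tableau n (w,f)" and S: "S \<subseteq> insert n (Rset (w,f))" and nS: "n \<in> S"
  shows "U (extW (w,f) S) = card S"
proof -
  note l = is_tab_D1[OF h]
  have "{k. unrestricted_row (extW (w,f) S) k} = S"
    unfolding UR_extW[OF h S]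
  proof (rule set_eqI, rule iffI)
    fix k assume k: "k \<in> {k. (k = n \<or> k \<in> Rset (w,f)) \<and> \<not>(k \<notin> S \<and> ((\<exists>k'\<in>S. key w k' < key w k) \<or> k = n))}"
    show "k \<in> S"
    proof (rule ccontr)
      assume kS: "k \<notin> S"
      then have "k \<noteq> n" using nS by blast
      then have "k \<in> Rset (w,f)" using k by blast
      then have "key w n < key w k" using key_n[of w] key_pos[of k w] Rset_lt[of k w f] l by simp
      then show False using k kS nS by blast
    qed
  next
    fix k assume "k \<in> S"
    then show "k \<in> {k. (k = n \<or> k \<in> Rset (w,f)) \<and> \<not>(k \<notin> S \<and> ((\<exists>k'\<in>S. key w k' < key w k) \<or> k = n))}"
      using S by blast
  qed
  then show ?thesis unfolding U_def by simp
qed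

lemma U_extW_out:
  assumes h: "is_tableau n (w,f)" and S: "S \<subseteq> Rset (w,f)"
  shows "U (extW (w,f) S) = card {k\<in>Rset (w,f). k\<in>S \<or> \<not>(\<exists>k'\<in>S. key w k' < key w k)}"
proof -
  note l = is_tab_D1[OF h]
  have nS: "n \<notin> S" using S Rset_lt[of n w f] l by auto
  have S': "S \<subseteq> insert n (Rset (w,f))" using S by auto
  have "{k. unrestricted_row (extW (w,f) S) k} = {k\<in>Rset (w,f). k\<in>S \<or> \<not>(\<exists>k'\<in>S. key w k' < key w k)}"
    unfolding UR_extW[OF h S'] using nS Rset_lt[of n w f] l by blast
  then show ?thesis unfolding U_def by simp
qed

lemma trunc_extS: "is_tableau n (w,f) \<Longrightarrow> trunc n (extS (w,f)) = (w,f)"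
  using is_tab_D1[of n w f] is_tab_D2[of n w f] cell_lt[of w]
  unfolding trunc_def extS_def by (auto intro!: ext)

lemma trunc_extW: "is_tableau n (w,f) \<Longrightarrow> trunc n (extW (w,f) S) = (w,f)"
  using is_tab_D1[of n w f] is_tab_D2[of n w f] cell_lt[of w]
  unfolding trunc_def extW_eq by (auto intro!: ext)

lemma decomp:
  assumes h: "is_tableau (Suc n) (W,G)"
  shows "is_tableau n (trunc n (W,G)) \<and> ((W,G) = extS (trunc n (W,G)) \<or>
     (\<exists>S. S \<subseteq> insert n (Rset (trunc n (W,G))) \<and> S \<noteq> {} \<and> (W,G) = extW (trunc n (W,G)) S))"
proof -
  note L = is_tab_D1[OF h] and G2 = is_tab_D2[OF h] and G3 = is_tab_D3[OF h]
    and G4 = is_tab_D4[OF h] and G5 = is_tab_D5[OF h]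
  define w where "w = take n W"
  define s where "s = W ! n"
  define f where "f a b = (a < n \<and> b < n \<and> G a b)" for a b
  have "take (Suc n) W = take n W @ [W!n]" by (rule take_Suc_conv_app_nth) (simp add: L)
  moreover have "take (Suc n) W = W" using L by simp
  ultimately have Wd: "W = w @ [s]" unfolding w_def s_def by simp
  have l: "length w = n" unfolding w_def using L by simp
  have tr: "trunc n (W,G) = (w,f)" unfolding trunc_def w_def f_def by simp
  have cW: "\<And>k j. cell W k j \<longleftrightarrow> (k < n \<and> j < n \<and> cell w k j) \<or> (j = n \<and> \<not> s \<and> k \<le> n)"
    unfolding Wd cell_app l ..
  have cwl: "\<And>k j. cell w k j \<Longrightarrow> k < n \<and> j < n" using cell_lt l by blast
  have aW: "\<And>k' k j. j < n \<Longrightarrow> above W k' k j \<longleftrightarrow> above w k' k j"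
    unfolding Wd using above_old l by blast
  have dW: "\<And>k j. j < n \<Longrightarrow> diag_cell W k j \<longleftrightarrow> diag_cell w k j"
    unfolding Wd using diag_old l by blast
  have Gc: "\<And>a b. G a b \<Longrightarrow> (a < n \<and> b < n \<and> cell w a b) \<or> (b = n \<and> \<not> s \<and> a \<le> n)"
    using G2 cW by blast
  have c2: "\<forall>k j. f k j \<longrightarrow> cell w k j" unfolding f_def using Gc by blast
  have c3: "\<forall>j<n. \<not> w ! j \<longrightarrow> (\<exists>k. cell w k j \<and> f k j)"
  proof (intro allI impI)
    fix j assume j: "j < n" "\<not> w ! j"
    then have "\<not> W ! j" unfolding Wd using l by (simp add: nth_append)
    moreover have "j < Suc n" using j by simp
    ultimately have "\<exists>k. cell W k j \<and> G k j" using G3 by blast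
    then obtain k where "cell W k j" "G k j" by blast
    then show "\<exists>k. cell w k j \<and> f k j" using j cW unfolding f_def by blast
  qed
  have c4: "\<forall>k j. cell w k j \<and> \<not> f k j \<and> (\<exists>k'. above w k' k j \<and> f k' j)
              \<longrightarrow> \<not> (\<exists>j'. j < j' \<and> cell w k j' \<and> f k j')"
  proof (intro allI impI)
    fix k j assume a: "cell w k j \<and> \<not> f k j \<and> (\<exists>k'. above w k' k j \<and> f k' j)"
    then have kj: "k < n" "j < n" using cwl by auto
    obtain k' where k': "above w k' k j" "f k' j" using a by blast
    have "cell W k j" "\<not> G k j" "above W k' k j" "G k' j"
      using a kj k' cW aW f_def by auto
    then have no: "\<not> (\<exists>j'. j < j' \<and> cell W k j' \<and> G k j')" using G4 by blast
    show "\<not> (\<exists>j'. j < j' \<and> cell w k j' \<and> f k j')"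
      using no cW cwl unfolding f_def by blast
  qed
  have c5: "\<forall>j. diag_cell w j j \<and> \<not> f j j \<longrightarrow> (\<forall>j'. cell w j j' \<longrightarrow> \<not> f j j')"
  proof (intro allI impI)
    fix j j' assume a: "diag_cell w j j \<and> \<not> f j j" and c: "cell w j j'"
    then have jn: "j < n" using cwl unfolding diag_cell_def by blast
    have "diag_cell W j j" "\<not> G j j" using a jn dW f_def by auto
    then show "\<not> f j j'" using G5 c cW cwl unfolding f_def by blast
  qed
  have tab: "is_tableau n (w,f)" unfolding is_tab_unf
    apply (intro conjI)
    apply (rule l)
    apply (rule c2)
    apply (rule c3)
    apply (rule c4)
    apply (rule c5)
    done
  have shape: "(W,G) = extS (w,f) \<or> (\<exists>S. S \<subseteq> insert n (Rset (w,f)) \<and> S \<noteq> {} \<and> (W,G) = extW (w,f) S)"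
  proof (cases s)
    case True
    have "G = f" using Gc True unfolding f_def by (intro ext) blast
    then show ?thesis using Wd True unfolding extS_def by simp
  next
    case False
    define S where "S = {k. G k n}"
    have Geq: "G = (\<lambda>k j. f k j \<or> (j = length w \<and> k \<in> S))"
      using Gc l unfolding f_def S_def by (intro ext) auto
    have "\<not> W ! n" using False s_def by simp
    then have "\<exists>k. cell W k n \<and> G k n" using G3 by blast
    then obtain k0 where "G k0 n" by blast
    then have ne: "S \<noteq> {}" unfolding S_def by blast
    have sub: "S \<subseteq> insert n (Rset (w,f))"
    proof
      fix k assume "k \<in> S"
      then have Gk: "G k n" unfolding S_def by simp
      then have kn: "k \<le> n" using Gc cwl by blast
      have cWn: "cell W k n" using kn False cW by blast
      show "k \<in> insert n (Rset (w,f))"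
      proof (cases "k = n")
        case True then show ?thesis by simp
      next
        case False
        then have kl: "k < n" using kn by simp
        have "\<not> restricted_zero (w,f) k j" for j
        proof
          assume "restricted_zero (w,f) k j"
          then have r: "cell w k j" "\<not> f k j" "(\<exists>k'. above w k' k j \<and> f k' j) \<or> diag_cell w k j"
            unfolding rz_unf by auto
          then have jn: "j < n" using cwl by blast
          have cg: "cell W k j" "\<not> G k j" using r kl jn cW f_def by auto
          from r(3) show False
          proof
            assume "\<exists>k'. above w k' k j \<and> f k' j"
            then obtain k' where "above W k' k j" "G k' j" using aW jn f_def by blast
            then have "\<not> (\<exists>j'. j < j' \<and> cell W k j' \<and> G k j')" using G4 cg by blast
            then show False using jn cWn Gk by blast
          next
            assume d: "diag_cell w k j"
            then have "j = k" unfolding diag_cell_def by simp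
            then have "diag_cell W k k" "\<not> G k k" using d dW jn cg by auto
            then show False using G5 cWn Gk by blast
          qed
        qed
        then have "k \<in> Rset (w,f)" unfolding Rset_def ur_unf using kl l by simp
        then show ?thesis by simp
      qed
    qed
    have "(W,G) = extW (w,f) S" unfolding extW_eq Wd Geq using False by simp
    then show ?thesis using ne sub by blast
  qed
  show ?thesis unfolding tr using tab shape by blast
qed

lemma fiber:
  assumes h: "is_tableau n (w,f)"
  shows "{T\<in>tableaux (Suc n). trunc n T = (w,f)} =
    insert (extS (w,f)) (extW (w,f) ` {S. S \<subseteq> insert n (Rset (w,f)) \<and> S \<noteq> {}})"
proof (rule set_eqI, rule iffI)
  fix T assume T: "T \<in> {T\<in>tableaux (Suc n). trunc n T = (w,f)}"
  obtain W G where TWG: "T = (W,G)" by (cases T)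
  have "is_tableau (Suc n) (W,G)" "trunc n (W,G) = (w,f)" using T TWG unfolding tableaux_def by auto
  then show "T \<in> insert (extS (w,f)) (extW (w,f) ` {S. S \<subseteq> insert n (Rset (w,f)) \<and> S \<noteq> {}})"
    using decomp[of n W G] TWG by auto
next
  fix T assume "T \<in> insert (extS (w,f)) (extW (w,f) ` {S. S \<subseteq> insert n (Rset (w,f)) \<and> S \<noteq> {}})"
  then show "T \<in> {T\<in>tableaux (Suc n). trunc n T = (w,f)}"
    unfolding tableaux_def using tab_extS[OF h] trunc_extS[OF h] tab_extW[OF h] trunc_extW[OF h] by auto
qed

lemma inj_extW: assumes "\<forall>k. \<not> f k (length w)" shows "inj_on (extW (w,f)) A"
proof (rule inj_onI)
  fix S1 S2 assume e: "extW (w,f) S1 = extW (w,f) S2"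
  show "S1 = S2"
  proof (rule set_eqI)
    fix k
    have "(f k (length w) \<or> k \<in> S1) = (f k (length w) \<or> k \<in> S2)"
      using arg_cong[OF e, of "\<lambda>T. snd T k (length w)"] unfolding extW_eq by simp
    then show "k \<in> S1 \<longleftrightarrow> k \<in> S2" using assms by blast
  qed
qed

lemma fiber_sum:
  fixes a :: real
  assumes h: "is_tableau n (w,f)"
  shows "(\<Sum>T\<in>{T\<in>tableaux (Suc n). trunc n T = (w,f)}. a ^ U T) = 2 * a * (1+a) ^ U (w,f)"
proof -
  note l = is_tab_D1[OF h]
  have fn: "\<forall>k. \<not> f k (length w)" using is_tab_D2[OF h] cell_lt[of w] by blast
  define R where "R = Rset (w,f)"
  have finR: "finite R" unfolding R_def Rset_def by (rule finite_ur)
  have nR: "n \<notin> R" unfolding R_def using Rset_lt[of n w f] l by auto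
  have UR: "U (w,f) = card R" unfolding U_def R_def Rset_def ..
  define C where "C = {S. S \<subseteq> insert n R \<and> S \<noteq> {}}"
  have finC: "finite C" unfolding C_def using finR by auto
  have notin: "extS (w,f) \<notin> extW (w,f) ` C" unfolding extS_def extW_eq by auto
  have "(\<Sum>T\<in>{T\<in>tableaux (Suc n). trunc n T = (w,f)}. a ^ U T)
      = a ^ U (extS (w,f)) + (\<Sum>T\<in>extW (w,f) ` C. a ^ U T)"
    unfolding fiber[OF h] C_def[symmetric] R_def[symmetric] using finC notin by (simp add: sum.insert)
  also have "(\<Sum>T\<in>extW (w,f) ` C. a ^ U T) = (\<Sum>S\<in>C. a ^ U (extW (w,f) S))"
    by (rule sum.reindex[OF inj_extW[of f w, OF fn], unfolded comp_def])
  also have "C = insert n ` Pow R \<union> {S. S \<subseteq> R \<and> S \<noteq> {}}"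
  proof (rule set_eqI, rule iffI)
    fix S assume S: "S \<in> C"
    show "S \<in> insert n ` Pow R \<union> {S. S \<subseteq> R \<and> S \<noteq> {}}"
    proof (cases "n \<in> S")
      case True
      then have "S = insert n (S - {n})" by auto
      moreover have "S - {n} \<in> Pow R" using S unfolding C_def by auto
      ultimately show ?thesis by blast
    next
      case False then show ?thesis using S unfolding C_def by auto
    qed
  next
    fix S assume "S \<in> insert n ` Pow R \<union> {S. S \<subseteq> R \<and> S \<noteq> {}}"
    then show "S \<in> C" unfolding C_def by auto
  qed
  also have "(\<Sum>S\<in>insert n ` Pow R \<union> {S. S \<subseteq> R \<and> S \<noteq> {}}. a ^ U (extW (w,f) S))
     = (\<Sum>S\<in>insert n ` Pow R. a ^ U (extW (w,f) S)) + (\<Sum>S\<in>{S. S \<subseteq> R \<and> S \<noteq> {}}. a ^ U (extW (w,f) S))"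
    by (rule sum.union_disjoint) (use finR nR in auto)
  also have "(\<Sum>S\<in>insert n ` Pow R. a ^ U (extW (w,f) S)) = (\<Sum>S\<in>Pow R. a ^ U (extW (w,f) (insert n S)))"
    by (rule sum.reindex[unfolded comp_def]) (use nR in \<open>unfold inj_on_def; metis PowD insert_ident subsetD\<close>)
  also have "\<dots> = (\<Sum>S\<in>Pow R. a * a ^ card S)"
  proof (rule sum.cong)
    fix S assume S: "S \<in> Pow R"
    have "U (extW (w,f) (insert n S)) = card (insert n S)"
      by (rule U_extW_in[OF h]) (use S R_def in auto)
    also have "\<dots> = Suc (card S)" using S nR finR finite_subset by (auto intro!: card_insert_disjoint)
    finally show "a ^ U (extW (w,f) (insert n S)) = a * a ^ card S" by simp
  qed simp
  also have "\<dots> = a * (1+a) ^ card R" using sum_pow_card[OF finR, of a] by (simp add: sum_distrib_left[symmetric])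
  also have "(\<Sum>S\<in>{S. S \<subseteq> R \<and> S \<noteq> {}}. a ^ U (extW (w,f) S))
     = (\<Sum>S\<in>{S. S \<subseteq> R \<and> S \<noteq> {}}. a ^ card {k\<in>R. k\<in>S \<or> \<not>(\<exists>k'\<in>S. key w k' < key w k)})"
    by (rule sum.cong) (simp_all add: U_extW_out[OF h] R_def)
  also have "\<dots> = a*(1+a)^card R - a^Suc(card R)"
  proof (rule gen_sum[OF finR])
    have "R \<subseteq> {..length w}" unfolding R_def using Rset_lt[of _ w f] by fastforce
    then show "inj_on (key w) R" using inj_key[of w] by (rule inj_on_subset[rotated])
  qed
  also have "U (extS (w,f)) = Suc (card R)" using U_extS[OF h] UR by simp
  finally show ?thesis using UR by (simp add: algebra_simps)
qed



lemma trunc_tab: "T \<in> tableaux (Suc n) \<Longrightarrow> trunc n T \<in> tableaux n"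
  using decomp[of n "fst T" "snd T"] unfolding tableaux_def by auto

lemma tab0: "tableaux 0 = {([], \<lambda>_ _. False)}"
proof (rule set_eqI)
  fix T :: tableau
  obtain w f where T: "T = (w,f)" by (cases T)
  show "T \<in> tableaux 0 \<longleftrightarrow> T \<in> {([], \<lambda>_ _. False)}"
  proof
    assume "T \<in> tableaux 0"
    then have h: "is_tableau 0 (w,f)" unfolding tableaux_def T by simp
    have w: "w = []" using is_tab_D1[OF h] by simp
    have "f = (\<lambda>_ _. False)" using is_tab_D2[OF h] cell_lt[of w] w by (intro ext) auto
    then show "T \<in> {([], \<lambda>_ _. False)}" using T w by simp
  next
    assume "T \<in> {([], \<lambda>_ _. False)}"
    then show "T \<in> tableaux 0" unfolding tableaux_def is_tableau_def cell_def diag_cell_def above_def by simp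
  qed
qed

lemma finite_fiber: "T' \<in> tableaux n \<Longrightarrow> finite {T\<in>tableaux (Suc n). trunc n T = T'}"
proof -
  assume "T' \<in> tableaux n"
  moreover obtain w f where T': "T' = (w,f)" by (cases T')
  ultimately have h: "is_tableau n (w,f)" unfolding tableaux_def by simp
  have "finite {S. S \<subseteq> insert n (Rset (w,f)) \<and> S \<noteq> {}}"
    using finite_ur[of "(w,f)"] unfolding Rset_def by auto
  then show ?thesis unfolding T' fiber[OF h] by simp
qed

lemma finite_tab: "finite (tableaux n)"
proof (induction n)
  case 0 then show ?case by (simp add: tab0)
next
  case (Suc n)
  have "tableaux (Suc n) \<subseteq> (\<Union>T'\<in>tableaux n. {T\<in>tableaux (Suc n). trunc n T = T'})"
    using trunc_tab by blast
  moreover have "finite (\<Union>T'\<in>tableaux n. {T\<in>tableaux (Suc n). trunc n T = T'})"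
    using Suc finite_fiber by blast
  ultimately show ?case by (rule finite_subset)
qed

lemma sum_split: "(\<Sum>T\<in>tableaux (Suc n). g T) = (\<Sum>T'\<in>tableaux n. \<Sum>T\<in>{T\<in>tableaux (Suc n). trunc n T = T'}. g T)"
  by (rule sum.group[symmetric]) (use finite_tab trunc_tab in auto)

lemma fiber_sum': "T' \<in> tableaux n \<Longrightarrow> (\<Sum>T\<in>{T\<in>tableaux (Suc n). trunc n T = T'}. (a::real) ^ U T) = 2 * a * (1+a) ^ U T'"
proof -
  assume "T' \<in> tableaux n"
  moreover obtain w f where T': "T' = (w,f)" by (cases T')
  ultimately have h: "is_tableau n (w,f)" unfolding tableaux_def by simp
  show ?thesis unfolding T' by (rule fiber_sum[OF h])
qed

lemma P_formula: "(\<Sum>T\<in>tableaux n. (a::real) ^ U T) = 2^n * pochhammer a n"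
proof (induction n arbitrary: a)
  case 0
  have "U ([], \<lambda>_ _. False) = 0" unfolding U_def unrestricted_row_def by simp
  then show ?case by (simp add: tab0)
next
  case (Suc n)
  have "(\<Sum>T\<in>tableaux (Suc n). a ^ U T) = (\<Sum>T'\<in>tableaux n. 2 * a * (1+a) ^ U T')"
    unfolding sum_split by (rule sum.cong) (simp_all add: fiber_sum')
  also have "\<dots> = 2 * a * (\<Sum>T'\<in>tableaux n. (a+1) ^ U T')" by (simp add: sum_distrib_left add.commute)
  also have "\<dots> = 2 * a * (2^n * pochhammer (a+1) n)" using Suc by simp
  finally show ?case by (simp add: pochhammer_rec)
qed

lemma card_tab: "real (card (tableaux n)) = 2^n * fact n"
  using P_formula[where a=1 and n=n] by (simp add: pochhammer_fact)

lemma tab_ne: "tableaux n \<noteq> {}"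
proof
  assume "tableaux n = {}"
  then have "real (card (tableaux n)) = 0" by simp
  then show False using card_tab[of n] by simp
qed

lemma E_eq: "E n Y = (\<Sum>T\<in>tableaux n. Y T) / real (card (tableaux n))"
  unfolding E_def using integral_pmf_of_set[OF tab_ne finite_tab] by simp

theorem mainTheorem1:
  fixes m :: nat and a :: real and X :: "tableau \<Rightarrow> real"
  assumes "m \<ge> 2"
  shows "E m (\<lambda>T. X (trunc (m - 1) T) * a ^ U T)
         = a / real m * E (m - 1) (\<lambda>T. X T * (a + 1) ^ U T)"
proof -
  obtain n where m: "m = Suc n" using assms by (cases m) auto
  have mn: "m - 1 = n" using m by simp
  have num: "(\<Sum>T\<in>tableaux (Suc n). X (trunc n T) * a ^ U T) = (\<Sum>T'\<in>tableaux n. X T' * (2 * a * (1+a) ^ U T'))"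
    unfolding sum_split
  proof (rule sum.cong)
    fix T' assume T': "T' \<in> tableaux n"
    have "(\<Sum>T\<in>{T\<in>tableaux (Suc n). trunc n T = T'}. X (trunc n T) * a ^ U T)
        = (\<Sum>T\<in>{T\<in>tableaux (Suc n). trunc n T = T'}. X T' * a ^ U T)" by (rule sum.cong) auto
    also have "\<dots> = X T' * (2 * a * (1+a) ^ U T')" using fiber_sum'[OF T', of a] by (simp add: sum_distrib_left[symmetric])
    finally show "(\<Sum>T\<in>{T\<in>tableaux (Suc n). trunc n T = T'}. X (trunc n T) * a ^ U T) = X T' * (2 * a * (1+a) ^ U T')" .
  qed simp
  have cards: "real (card (tableaux (Suc n))) = 2 * real (Suc n) * real (card (tableaux n))"
    unfolding card_tab by simp
  have pos: "real (card (tableaux n)) \<noteq> 0" using card_tab[of n] by simp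
  have "E m (\<lambda>T. X (trunc (m - 1) T) * a ^ U T) = (\<Sum>T'\<in>tableaux n. X T' * (2 * a * (1+a) ^ U T')) / (2 * real (Suc n) * real (card (tableaux n)))"
    unfolding E_eq mn unfolding m num cards ..
  also have "\<dots> = a / real (Suc n) * ((\<Sum>T'\<in>tableaux n. X T' * (a + 1) ^ U T') / real (card (tableaux n)))"
  proof -
    have eq: "(\<Sum>T'\<in>tableaux n. X T' * (2 * a * (1+a) ^ U T')) = 2 * a * (\<Sum>T'\<in>tableaux n. X T' * (a + 1) ^ U T')"
      by (simp add: sum_distrib_left mult_ac add.commute)
    have g: "\<And>Q c k. (c::real) \<noteq> 0 \<Longrightarrow> (k::real) > 0 \<Longrightarrow> (2*a*Q)/(2*k*c) = a/k*(Q/c)"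
      by (simp add: field_simps)
    show ?thesis unfolding eq by (rule g) (use pos in simp_all)
  qed
  finally show ?thesis unfolding E_eq m diff_Suc_1 .
qed


end
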